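(* Let $a_1,\dots,a_5,b,\beta_{vh},m,\tau_h,\tau_v,\mu_v,z_0>0$, $y_0=z_0a_1/a_2$, let $g\ge0$ be a probability density on $[0,y_0]$ with mean $y^\star=\int_0^{y_0}yg(y)\,dy\in(0,y_0)$, and let $\beta_{hv}(z)$ be a given function. Suppose $S(t),E(t),E_v(t),I_v(t)$, $I(t,z,y)$ ($z\ge z_0$, $y\ge0$) and $R(t,y)$ ($y\ge y_0$) are classical solutions of $$\partial_tI+\partial_z\big((a_1z-a_2y)I\big)+\partial_y\big((-a_3y+a_4z)I\big)=0,$$ $$\partial_tR-\partial_y(a_5yR)=-I(t,z_0,y)(a_1z_0-a_2y),\quad y\ge y_0,$$ $$\dot S=-b\beta_{vh}mI_vS+a_5y_0R(t,y_0),\qquad \dot E=b\beta_{vh}mI_vS-\tfrac1{\tau_h}E,$$ $$\dot E_v=b\int_0^\infty\!\!\int_{z_0}^\infty I(t,z,y)\beta_{hv}(z)\,dz\,dy\,(1-E_v-I_v)-\Big(\tfrac1{\tau_v}+\mu_v\Big)E_v,\qquad \dot I_v=\tfrac1{\tau_v}E_v-\mu_vI_v,$$ with boundary conditions $I(t,z_0,y)=\dfrac{E(t)g(y)}{(a_1z_0-a_2y^\star)\tau_h}$ for $y\in[0,y_0]$ and $I(t,z,0)=0$ for $z>z_0$, and with $R(t,y)\to0$ as $y\to\infty$ and $I(t,z,y)\to0$ as $z^2+y^2\to\infty$ (sufficiently fast for the integrals below to be computed by integrating the equations). Then $$\frac{d}{dt}\Big(S(t)+E(t)+\int_0^\infty\!\!\int_{z_0}^\infty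 I(t,z,y)\,dz\,dy+\int_{y_0}^\infty R(t,y)\,dy\Big)=0.$$
   Context: This is a host–vector epidemic model: $S,E$ are the susceptible and exposed host proportions, $I(t,z,y)$ the density of infected hosts with respect to viral load $z$ and antibody level $y$, $R(t,y)$ the density of recovered hosts with respect to antibody level, and $E_v,I_v$ the exposed and infected vector proportions; $m=N_v/N_h$ is the vector-to-host ratio. *)

theory Defs
  imports "HOL-Analysis.Analysis"
begin

end

theory Submission
  imports Defs "HOL-Probability.Sinc_Integral" "HOL-Real_Asymp.Real_Asymp"
begin

lemma DCT_at:
  fixes g :: "real \<Rightarrow> 'a \<Rightarrow> real" and g0 w :: "'a \<Rightarrow> real"
  assumes meas: "\<forall>\<^sub>F s in at t within T. g s \<in> borel_measurable M"
    and meas0: "g0 \<in> borel_measurable M"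
    and intw: "integrable M w"
    and lim: "AE x in M. ((\<lambda>s. g s x) \<longlongrightarrow> g0 x) (at t within T)"
    and bound: "\<forall>\<^sub>F s in at t within T. AE x in M. \<bar>g s x\<bar> \<le> w x"
  shows "((\<lambda>s. integral\<^sup>L M (g s)) \<longlongrightarrow> integral\<^sup>L M g0) (at t within T)"
proof (subst tendsto_at_iff_sequentially, intro allI impI)
  fix X :: "nat \<Rightarrow> real"
  assume X1: "\<forall>i. X i \<in> T - {t}" and X2: "X \<longlonglongrightarrow> t"
  have XF: "filterlim X (at t within T) sequentially"
    using X1 X2 by (auto simp: filterlim_at)
  have "\<forall>\<^sub>F n in sequentially. g (X n) \<in> borel_measurable M \<and> (AE x in M. \<bar>g (X n) x\<bar> \<le> w x)"
    using filterlim_iff[THEN iffD1, OF XF, rule_format, OF eventually_conj[OF meas bound]] .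
  then obtain N where N: "\<And>n. N \<le> n \<Longrightarrow> g (X n) \<in> borel_measurable M \<and> (AE x in M. \<bar>g (X n) x\<bar> \<le> w x)"
    by (auto simp: eventually_sequentially)
  show "((\<lambda>s. integral\<^sup>L M (g s)) \<circ> X) \<longlonglongrightarrow> integral\<^sup>L M g0"
    unfolding comp_def
  proof (rule LIMSEQ_offset[where k=N], rule integral_dominated_convergence[where w=w])
    show "AE x in M. norm (g (X (n + N)) x) \<le> w x" for n
      using N[of "n+N"] by simp
    show "g (X (n + N)) \<in> borel_measurable M" for n
      using N[of "n+N"] by simp
    show "AE x in M. (\<lambda>n. g (X (n + N)) x) \<longlonglongrightarrow> g0 x"
      using lim
    proof eventually_elim
      fix x assume "((\<lambda>s. g s x) \<longlongrightarrow> g0 x) (at t within T)"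
      then have "(\<lambda>n. g (X n) x) \<longlonglongrightarrow> g0 x" by (rule filterlim_compose[OF _ XF])
      then show "(\<lambda>n. g (X (n + N)) x) \<longlonglongrightarrow> g0 x" by (rule LIMSEQ_ignore_initial_segment)
    qed
  qed (fact meas0 intw)+
qed


lemma diff_int:
  fixes f f' :: "real \<Rightarrow> 'a \<Rightarrow> real" and w :: "'a \<Rightarrow> real"
  assumes d: "d > 0"
    and meas: "\<And>s. s \<in> ball t d \<Longrightarrow> f s \<in> borel_measurable M"
    and meas': "f' t \<in> borel_measurable M"
    and intf: "integrable M (f t)"
    and intw: "integrable M w"
    and der: "AE x in M. \<forall>s\<in>ball t d. ((\<lambda>s. f s x) has_real_derivative f' s x) (at s) \<and> \<bar>f' s x\<bar> \<le> w x"
  shows "((\<lambda>s. integral\<^sup>L M (f s)) has_real_derivative integral\<^sup>L M (f' t)) (at t)"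
proof -
  have mvt: "AE x in M. \<forall>s\<in>ball t d. \<bar>f s x - f t x\<bar> \<le> w x * \<bar>s - t\<bar>"
    using der
  proof eventually_elim
    fix x assume H: "\<forall>s\<in>ball t d. ((\<lambda>s. f s x) has_real_derivative f' s x) (at s) \<and> \<bar>f' s x\<bar> \<le> w x"
    show "\<forall>s\<in>ball t d. \<bar>f s x - f t x\<bar> \<le> w x * \<bar>s - t\<bar>"
    proof
      fix s assume s: "s \<in> ball t d"
      have seg: "\<And>u. min s t \<le> u \<Longrightarrow> u \<le> max s t \<Longrightarrow> u \<in> ball t d"
        using s by (auto simp: dist_real_def)
      show "\<bar>f s x - f t x\<bar> \<le> w x * \<bar>s - t\<bar>"
      proof (cases "s = t")
        case True then show ?thesis by simp
      next
        case False
        have "\<exists>z. min s t < z \<and> z < max s t \<and> f (max s t) x - f (min s t) x = (max s t - min s t) * f' z x"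
          by (rule MVT2) (use False seg H in auto)
        then obtain z where z: "min s t < z" "z < max s t"
          "f (max s t) x - f (min s t) x = (max s t - min s t) * f' z x" by blast
        have zb: "\<bar>f' z x\<bar> \<le> w x" using H seg[of z] z by auto
        have "\<bar>f s x - f t x\<bar> = \<bar>f (max s t) x - f (min s t) x\<bar>"
          by (cases "s \<le> t") (auto simp: max_def min_def)
        also have "\<dots> = \<bar>max s t - min s t\<bar> * \<bar>f' z x\<bar>" using z(3) by (simp add: abs_mult)
        also have "\<dots> \<le> \<bar>s - t\<bar> * w x"
          by (rule mult_mono) (use zb in \<open>auto simp: max_def min_def\<close>)
        finally show ?thesis by (simp add: mult.commute)
      qed
    qed
  qed
  have intfs: "integrable M (f s)" if s: "s \<in> ball t d" for s
  proof (rule Bochner_Integration.integrable_bound[where f="\<lambda>x. \<bar>f t x\<bar> + w x * \<bar>s - t\<bar>"])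
    show "integrable M (\<lambda>x. \<bar>f t x\<bar> + w x * \<bar>s - t\<bar>)" using intf intw by auto
    show "f s \<in> borel_measurable M" using meas s .
    show "AE x in M. norm (f s x) \<le> norm (\<bar>f t x\<bar> + w x * \<bar>s - t\<bar>)"
      using mvt der
    proof eventually_elim
      case (elim x)
      then have "w x \<ge> 0" "\<bar>f s x - f t x\<bar> \<le> w x * \<bar>s - t\<bar>" using s by force+
      then show ?case by auto
    qed
  qed
  show ?thesis
    unfolding has_field_derivative_iff
  proof (rule Lim_transform_eventually)
    let ?g = "\<lambda>s x. (f s x - f t x) / (s - t)"
    show "((\<lambda>s. integral\<^sup>L M (?g s)) \<longlongrightarrow> integral\<^sup>L M (f' t)) (at t)"
    proof (rule DCT_at[where w=w])
      have ev: "\<forall>\<^sub>F s in at t. s \<in> ball t d"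
        using d by (simp add: eventually_at_filter eventually_nhds_metric) (metis dist_commute mem_ball)
      show "\<forall>\<^sub>F s in at t. ?g s \<in> borel_measurable M"
        using ev by eventually_elim (use meas[of t] d meas in auto)
      show "f' t \<in> borel_measurable M" by fact
      show "integrable M w" by fact
      show "AE x in M. ((\<lambda>s. ?g s x) \<longlongrightarrow> f' t x) (at t)"
        using der by eventually_elim (use d in \<open>auto simp: has_field_derivative_iff\<close>)
      show "\<forall>\<^sub>F s in at t. AE x in M. \<bar>?g s x\<bar> \<le> w x"
        using ev eventually_at[of "\<lambda>s. s \<noteq> t"]
      proof -
        have "\<forall>\<^sub>F s in at t. s \<in> ball t d \<and> s \<noteq> t"
          using ev by (auto simp: eventually_at_filter elim: eventually_mono)
        then show ?thesis
        proof eventually_elim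
          case (elim s)
          show ?case using mvt
          proof eventually_elim
            case (elim x)
            then have "\<bar>f s x - f t x\<bar> \<le> w x * \<bar>s - t\<bar>" using \<open>s \<in> ball t d \<and> s \<noteq> t\<close> by auto
            then show ?case using \<open>s \<in> ball t d \<and> s \<noteq> t\<close> by (simp add: abs_divide divide_le_eq)
          qed
        qed
      qed
    qed
    have "\<forall>\<^sub>F s in at t. s \<in> ball t d"
      using d by (simp add: eventually_at_filter eventually_nhds_metric) (metis dist_commute mem_ball)
    then show "\<forall>\<^sub>F s in at t. integral\<^sup>L M (?g s) = (integral\<^sup>L M (f s) - integral\<^sup>L M (f t)) / (s - t)"
    proof eventually_elim
      case (elim s)
      then show ?case using intfs[of s] intf by simp
    qed
  qed
qed


lemma FTC_inf:
  fixes K K' :: "real \<Rightarrow> real"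
  assumes cont: "continuous_on {a..} K"
    and der: "\<And>x. x > a \<Longrightarrow> (K has_real_derivative K' x) (at x)"
    and int: "set_integrable lborel {a<..} K'"
    and lim: "(K \<longlongrightarrow> L) at_top"
  shows "(LBINT x:{a<..}. K' x) = L - K a"
proof -
  have fin: "(LBINT x:{a<..<b}. K' x) = K b - K a" if b: "b > a" for b
  proof -
    have "(K' has_integral (K b - K a)) {a..b}"
      by (rule fundamental_theorem_of_calculus_interior)
         (use b cont der in \<open>auto intro: continuous_on_subset simp: has_real_derivative_iff_has_vector_derivative[symmetric]\<close>)
    then have h: "(K' has_integral (K b - K a)) {a<..<b}" by (simp add: has_integral_Icc_iff_Ioo)
    have si: "set_integrable lborel {a<..<b} K'"
      by (rule set_integrable_subset[OF int]) auto
    show ?thesis using set_borel_integral_eq_integral(2)[OF si] h by (simp add: integral_unique)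
  qed
  have lim1: "((\<lambda>b. LBINT x:{a<..<b}. K' x) \<longlongrightarrow> (LBINT x:{a<..}. K' x)) at_top"
    unfolding set_lebesgue_integral_def
  proof (rule integral_dominated_convergence_at_top[where w="\<lambda>x. indicator {a<..} x * \<bar>K' x\<bar>"])
    show "(\<lambda>x. indicator {a<..} x *\<^sub>R K' x) \<in> borel_measurable lborel"
      using int by (simp add: set_integrable_def)
    show "(\<lambda>x. indicator {a<..<b} x *\<^sub>R K' x) \<in> borel_measurable lborel" for b
    proof -
      have "(\<lambda>x. indicator {a<..<b} x *\<^sub>R K' x) = (\<lambda>x. indicator {..<b} x * (indicator {a<..} x *\<^sub>R K' x))"
        by (auto simp: indicator_def fun_eq_iff)
      then show ?thesis using int by (simp add: set_integrable_def)
    qed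
    show "integrable lborel (\<lambda>x. indicator {a<..} x * \<bar>K' x\<bar>)"
    proof -
      have "integrable lborel (\<lambda>x. \<bar>indicator {a<..} x *\<^sub>R K' x\<bar>)"
        using int unfolding set_integrable_def by (rule integrable_abs)
      moreover have "(\<lambda>x. \<bar>indicator {a<..} x *\<^sub>R K' x\<bar>) = (\<lambda>x. indicator {a<..} x * \<bar>K' x\<bar>)"
        by (auto simp: indicator_def fun_eq_iff)
      ultimately show ?thesis by simp
    qed
    show "AE x in lborel. ((\<lambda>b. indicator {a<..<b} x *\<^sub>R K' x) \<longlongrightarrow> indicator {a<..} x *\<^sub>R K' x) at_top"
    proof (rule AE_I2)
      fix x :: real
      have "\<forall>\<^sub>F b in at_top. indicator {a<..<b} x *\<^sub>R K' x = indicator {a<..} x *\<^sub>R K' x"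
        using eventually_gt_at_top[of x] by eventually_elim (auto simp: indicator_def)
      then show "((\<lambda>b. indicator {a<..<b} x *\<^sub>R K' x) \<longlongrightarrow> indicator {a<..} x *\<^sub>R K' x) at_top"
        by (rule tendsto_eventually)
    qed
    show "\<forall>\<^sub>F b in at_top. AE x in lborel. norm (indicator {a<..<b} x *\<^sub>R K' x) \<le> indicator {a<..} x * \<bar>K' x\<bar>"
      by (auto simp: indicator_def)
  qed
  have lim2: "((\<lambda>b. LBINT x:{a<..<b}. K' x) \<longlongrightarrow> L - K a) at_top"
  proof (rule Lim_transform_eventually[OF tendsto_diff[OF lim tendsto_const]])
    show "\<forall>\<^sub>F b in at_top. K b - K a = (LBINT x:{a<..<b}. K' x)"
      using eventually_gt_at_top[of a] by eventually_elim (simp add: fin)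
  qed
  show ?thesis using tendsto_unique[OF _ lim1 lim2] by simp
qed


lemma conv_Ici:
  fixes f g :: "real \<Rightarrow> real"
  assumes m: "(\<lambda>x. indicator {a<..} x * f x) \<in> borel_measurable lborel"
    and eq: "\<And>x. x > a \<Longrightarrow> g x = f x"
  shows "(LBINT x:{a..}. g x) = (LBINT x:{a<..}. f x)"
  unfolding set_lebesgue_integral_def
proof (rule integral_cong_AE)
  have "(\<lambda>x. indicator {a..} x *\<^sub>R g x) = (\<lambda>x. indicator {a<..} x * f x + indicator {a} x * g a)"
    using eq by (auto simp: indicator_def fun_eq_iff)
  then show "(\<lambda>x. indicator {a..} x *\<^sub>R g x) \<in> borel_measurable lborel" using m by simp
  show "(\<lambda>x. indicator {a<..} x *\<^sub>R f x) \<in> borel_measurable lborel" using m by simp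
  show "AE x in lborel. indicator {a..} x *\<^sub>R g x = indicator {a<..} x *\<^sub>R f x"
    using AE_lborel_singleton[of a] by eventually_elim (use eq in \<open>auto simp: indicator_def\<close>)
qed

lemma meas1:
  fixes f :: "real \<Rightarrow> real"
  assumes "open U" "continuous_on U f"
  shows "(\<lambda>x. indicator U x * f x) \<in> borel_measurable lborel"
  using borel_measurable_continuous_on_indicator[of U f] assms by simp

lemma meas2:
  fixes h :: "real \<Rightarrow> real \<Rightarrow> real"
  assumes "open U" "open V" "continuous_on (U \<times> V) (\<lambda>(y, z). h y z)"
  shows "(\<lambda>y. indicator U y * (LBINT z:V. h y z)) \<in> borel_measurable lborel"
proof -
  have m: "(\<lambda>p. indicator (U \<times> V) p *\<^sub>R (\<lambda>(y, z). h y z) p) \<in> borel_measurable borel"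
    by (rule borel_measurable_continuous_on_indicator) (use assms in \<open>auto intro: open_Times borel_open\<close>)
  have m2: "(\<lambda>p. indicator (U \<times> V) p *\<^sub>R (\<lambda>(y, z). h y z) p) \<in> borel_measurable (lborel \<Otimes>\<^sub>M lborel)"
    using m by (simp add: lborel_prod measurable_lborel2)
  have cp: "case_prod (\<lambda>y z. indicator (U \<times> V) (y, z) *\<^sub>R h y z) = (\<lambda>p. indicator (U \<times> V) p *\<^sub>R (\<lambda>(y, z). h y z) p)"
    by (auto simp: fun_eq_iff)
  have "(\<lambda>y. \<integral>z. indicator (U \<times> V) (y, z) *\<^sub>R h y z \<partial>lborel) \<in> borel_measurable lborel"
    by (rule lborel.borel_measurable_lebesgue_integral) (use m2 cp in simp)
  moreover have "(\<lambda>y. \<integral>z. indicator (U \<times> V) (y, z) *\<^sub>R h y z \<partial>lborel) = (\<lambda>y. indicator U y * (LBINT z:V. h y z))"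
    by (auto simp: fun_eq_iff set_lebesgue_integral_def indicator_def)
  ultimately show ?thesis by simp
qed

lemma int_inv: "integrable lborel (\<lambda>x::real. c / (1 + x^2))"
proof -
  have "integrable lborel (\<lambda>x::real. inverse (1 + x^2))"
    using integrable_inverse_1_plus_square by (simp add: set_integrable_def)
  then have "integrable lborel (\<lambda>x::real. c * inverse (1 + x^2))" by simp
  then show ?thesis by (simp add: divide_inverse)
qed

lemma set_int_inv: "set_integrable lborel A (\<lambda>x::real. c / (1 + x^2))" if "A \<in> sets lborel"
  unfolding set_integrable_def
  using integrable_mult_indicator[OF that int_inv[of c]] by simp


lemma pos3: "(1 + u\<^sup>2 + v\<^sup>2 :: real) > 0" "(1 + u\<^sup>2 + v\<^sup>2 :: real) \<ge> 1" "(1 + u\<^sup>2 + v\<^sup>2 :: real) \<noteq> 0"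
  using zero_le_power2[of u] zero_le_power2[of v] by linarith+

lemma sq_ge: "(1 + u\<^sup>2 :: real) \<le> (1 + u\<^sup>2 + v\<^sup>2)\<^sup>2"
proof -
  have "1 + u\<^sup>2 \<le> 1 + u\<^sup>2 + v\<^sup>2" by simp
  also have "\<dots> = 1 * (1 + u\<^sup>2 + v\<^sup>2)" by simp
  also have "\<dots> \<le> (1 + u\<^sup>2 + v\<^sup>2) * (1 + u\<^sup>2 + v\<^sup>2)" using pos3[of u v] by (intro mult_right_mono) auto
  finally show ?thesis by (simp add: power2_eq_square)
qed

lemma lb:
  fixes u v C J \<alpha> \<beta> \<gamma> :: real
  assumes J: "\<bar>J\<bar> \<le> C / (1 + u\<^sup>2 + v\<^sup>2)\<^sup>2" and u: "u \<ge> 0" and v: "v \<ge> 0"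
  shows "\<bar>(\<alpha> + \<beta> * u + \<gamma> * v) * J\<bar> \<le> (\<bar>\<alpha>\<bar> + \<bar>\<beta>\<bar> + \<bar>\<gamma>\<bar>) * C / (1 + u\<^sup>2)"
proof -
  define X where "X = (1 + u\<^sup>2 + v\<^sup>2)\<^sup>2"
  have X0: "X > 0" unfolding X_def using pos3[of u v] by simp
  have C0: "C \<ge> 0" using J X0 unfolding X_def[symmetric] by (metis abs_ge_zero order_trans zero_le_divide_iff not_less)
  have h1: "1 + u\<^sup>2 \<le> X" unfolding X_def by (rule sq_ge)
  have h2: "u * (1 + u\<^sup>2) \<le> X"
  proof -
    have "0 \<le> (u - 1)\<^sup>2" by simp
    then have "u \<le> 1 + u\<^sup>2" using u unfolding power2_eq_square by (simp add: algebra_simps)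
    then have "u * (1 + u\<^sup>2) \<le> (1 + u\<^sup>2) * (1 + u\<^sup>2)" by (intro mult_right_mono) auto
    also have "\<dots> \<le> (1 + u\<^sup>2 + v\<^sup>2) * (1 + u\<^sup>2 + v\<^sup>2)" by (intro mult_mono) auto
    finally show ?thesis by (simp add: X_def power2_eq_square)
  qed
  have h3: "v * (1 + u\<^sup>2) \<le> X"
  proof -
    have "0 \<le> (v - 1)\<^sup>2" by simp
    then have "v \<le> 1 + v\<^sup>2" using v unfolding power2_eq_square by (simp add: algebra_simps)
    then have "v * (1 + u\<^sup>2) \<le> (1 + v\<^sup>2) * (1 + u\<^sup>2)" by (intro mult_right_mono) auto
    also have "\<dots> \<le> (1 + u\<^sup>2 + v\<^sup>2) * (1 + u\<^sup>2 + v\<^sup>2)" by (intro mult_mono) auto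
    finally show ?thesis by (simp add: X_def power2_eq_square)
  qed
  have p: "1 + u\<^sup>2 > 0" by (simp add: add_pos_nonneg)
  have e1: "C / X \<le> C / (1 + u\<^sup>2)" using C0 h1 p by (intro divide_left_mono) auto
  have e2: "u * (C / X) \<le> C / (1 + u\<^sup>2)"
  proof -
    have "u * (C / X) = C * (u / X)" by simp
    also have "u / X \<le> 1 / (1 + u\<^sup>2)" using h2 p X0 by (simp add: divide_simps mult.commute)
    then have "C * (u / X) \<le> C * (1 / (1 + u\<^sup>2))" using C0 by (intro mult_left_mono)
    finally show ?thesis by simp
  qed
  have e3: "v * (C / X) \<le> C / (1 + u\<^sup>2)"
  proof -
    have "v * (C / X) = C * (v / X)" by simp
    also have "v / X \<le> 1 / (1 + u\<^sup>2)" using h3 p X0 by (simp add: divide_simps mult.commute)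
    then have "C * (v / X) \<le> C * (1 / (1 + u\<^sup>2))" using C0 by (intro mult_left_mono)
    finally show ?thesis by simp
  qed
  have JX: "\<bar>J\<bar> \<le> C / X" using J X_def by simp
  have "\<bar>(\<alpha> + \<beta> * u + \<gamma> * v) * J\<bar> \<le> (\<bar>\<alpha>\<bar> + \<bar>\<beta>\<bar> * u + \<bar>\<gamma>\<bar> * v) * \<bar>J\<bar>"
    unfolding abs_mult using u v
    by (intro mult_right_mono) (auto simp: abs_mult intro!: order.trans[OF abs_triangle_ineq] add_mono)
  also have "\<dots> \<le> (\<bar>\<alpha>\<bar> + \<bar>\<beta>\<bar> * u + \<bar>\<gamma>\<bar> * v) * (C / X)"
    using JX u v by (intro mult_left_mono) auto
  also have "\<dots> = \<bar>\<alpha>\<bar> * (C / X) + \<bar>\<beta>\<bar> * (u * (C / X)) + \<bar>\<gamma>\<bar> * (v * (C / X))"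
    by (simp add: algebra_simps)
  also have "\<dots> \<le> \<bar>\<alpha>\<bar> * (C / (1 + u\<^sup>2)) + \<bar>\<beta>\<bar> * (C / (1 + u\<^sup>2)) + \<bar>\<gamma>\<bar> * (C / (1 + u\<^sup>2))"
    using e1 e2 e3 by (intro add_mono mult_left_mono) auto
  also have "\<dots> = (\<bar>\<alpha>\<bar> + \<bar>\<beta>\<bar> + \<bar>\<gamma>\<bar>) * C / (1 + u\<^sup>2)" by (simp add: algebra_simps add_divide_distrib)
  finally show ?thesis .
qed

lemma lb':
  fixes u v C J \<alpha> \<beta> \<gamma> :: real
  assumes J: "\<bar>J\<bar> \<le> C / (1 + v\<^sup>2 + u\<^sup>2)\<^sup>2" and u: "u \<ge> 0" and v: "v \<ge> 0"
  shows "\<bar>(\<alpha> + \<beta> * u + \<gamma> * v) * J\<bar> \<le> (\<bar>\<alpha>\<bar> + \<bar>\<beta>\<bar> + \<bar>\<gamma>\<bar>) * C / (1 + u\<^sup>2)"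
  using lb[of J C u v] J u v by (simp add: add_ac)

lemma lb1:
  fixes u C J :: real
  assumes "\<bar>J\<bar> \<le> C / (1 + u\<^sup>2)\<^sup>2"
  shows "\<bar>J\<bar> \<le> C / (1 + u\<^sup>2)"
  using lb[of J C "\<bar>u\<bar>" 0 1 0 0] assms by simp

lemma lb_prod:
  fixes u v C J :: real
  assumes J: "\<bar>J\<bar> \<le> C / (1 + u\<^sup>2 + v\<^sup>2)\<^sup>2"
  shows "\<bar>J\<bar> \<le> C / (1 + v\<^sup>2) * (1 / (1 + u\<^sup>2))"
proof -
  define X where "X = (1 + u\<^sup>2 + v\<^sup>2)\<^sup>2"
  have X0: "X > 0" unfolding X_def using pos3[of u v] by simp
  have C0: "C \<ge> 0" using J X0 unfolding X_def[symmetric] by (metis abs_ge_zero order_trans zero_le_divide_iff not_less)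
  have "(1 + v\<^sup>2) * (1 + u\<^sup>2) \<le> X"
    unfolding X_def power2_eq_square[of "1 + u\<^sup>2 + v\<^sup>2"] by (intro mult_mono) auto
  then have "C / X \<le> C / ((1 + v\<^sup>2) * (1 + u\<^sup>2))"
    using C0 X0 by (intro divide_left_mono) (auto simp: add_pos_nonneg)
  then show ?thesis using J X_def by simp
qed

lemma lim_inv: "((\<lambda>z::real. c / (1 + z\<^sup>2)) \<longlongrightarrow> 0) at_top"
proof -
  have "((\<lambda>z::real. 1 / (1 + z\<^sup>2)) \<longlongrightarrow> 0) at_top" by real_asymp
  then have "((\<lambda>z::real. c * (1 / (1 + z\<^sup>2))) \<longlongrightarrow> 0) at_top" by (rule tendsto_mult_right_zero)
  then show ?thesis by simp
qed

lemma deriv_prod_lin: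
  fixes c f :: "real \<Rightarrow> real"
  assumes "(c has_real_derivative c') (at x)" "f differentiable (at x)"
  shows "((\<lambda>w. c w * f w) has_real_derivative (c' * f x + c x * deriv f x)) (at x)"
    and "deriv (\<lambda>w. c w * f w) x = c' * f x + c x * deriv f x"
proof -
  have "((\<lambda>w. c w * f w) has_real_derivative (c' * f x + deriv f x * c x)) (at x)"
    by (rule DERIV_mult[OF assms(1)]) (use assms(2) DERIV_deriv_iff_real_differentiable in blast)
  then show 1: "((\<lambda>w. c w * f w) has_real_derivative (c' * f x + c x * deriv f x)) (at x)"
    by (simp add: mult.commute)
  show "deriv (\<lambda>w. c w * f w) x = c' * f x + c x * deriv f x"
    by (rule DERIV_imp_deriv[OF 1])
qed

lemma bnd_int:
  fixes J :: "real \<Rightarrow> real"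
  assumes "\<And>z. z > a \<Longrightarrow> \<bar>J z\<bar> \<le> B * (1 / (1 + z\<^sup>2))"
  shows "\<bar>LBINT z:{a<..}. J z\<bar> \<le> B * (LBINT z. 1 / (1 + z\<^sup>2))"
proof -
  have B0: "B \<ge> 0"
  proof -
    have "0 \<le> B * (1 / (1 + (a+1)\<^sup>2))" using assms[of "a+1"] by (meson abs_ge_zero less_add_one order_trans)
    moreover have "1 / (1 + (a+1)\<^sup>2) > 0" by (simp add: add_pos_nonneg)
    ultimately show ?thesis by (simp add: zero_le_divide_iff)
  qed
  have "\<bar>LBINT z:{a<..}. J z\<bar> \<le> (\<integral>z. \<bar>indicator {a<..} z *\<^sub>R J z\<bar> \<partial>lborel)"
    unfolding set_lebesgue_integral_def by (rule integral_abs_bound)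
  also have "\<dots> \<le> (\<integral>z. B * (1 / (1 + z\<^sup>2)) \<partial>lborel)"
  proof (rule integral_mono')
    show "integrable lborel (\<lambda>z. B * (1 / (1 + z\<^sup>2)))" using int_inv[of B] by simp
    show "\<bar>indicator {a<..} z *\<^sub>R J z\<bar> \<le> B * (1 / (1 + z\<^sup>2))" for z
      using assms[of z] B0 by (auto simp: indicator_def add_pos_nonneg)
    show "0 \<le> B * (1 / (1 + z\<^sup>2))" for z using B0 by (simp add: add_pos_nonneg)
  qed
  also have "\<dots> = B * (LBINT z. 1 / (1 + z\<^sup>2))" by (rule integral_mult_right_zero)
  finally show ?thesis .
qed

lemma set_int_bound:
  fixes f :: "real \<Rightarrow> real"
  assumes "(\<lambda>x. indicator A x * f x) \<in> borel_measurable lborel"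
    and "\<And>x. x \<in> A \<Longrightarrow> \<bar>f x\<bar> \<le> B / (1 + x\<^sup>2)"
  shows "set_integrable lborel A f"
  unfolding set_integrable_def
proof (rule Bochner_Integration.integrable_bound[OF int_inv[of B]])
  show "(\<lambda>x. indicator A x *\<^sub>R f x) \<in> borel_measurable lborel" using assms(1) by simp
  show "AE x in lborel. norm (indicator A x *\<^sub>R f x) \<le> norm (B / (1 + x\<^sup>2))"
  proof (rule AE_I2)
    fix x
    show "norm (indicator A x *\<^sub>R f x) \<le> norm (B / (1 + x\<^sup>2))"
    proof (cases "x \<in> A")
      case True
      have "\<bar>f x\<bar> \<le> B / (1 + x\<^sup>2)" using assms(2) True by blast
      also have "\<dots> \<le> \<bar>B / (1 + x\<^sup>2)\<bar>" by (rule abs_ge_self)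
      finally show ?thesis using True by simp
    qed simp
  qed
qed

lemma conv_sub:
  fixes f :: "real \<Rightarrow> real"
  assumes m: "(\<lambda>x. indicator A x * f x) \<in> borel_measurable lborel"
    and B: "B \<in> sets lborel" "B \<subseteq> A" and ae: "AE x in lborel. x \<in> A \<longrightarrow> x \<in> B"
  shows "(LBINT x:B. f x) = (LBINT x:A. f x)"
  unfolding set_lebesgue_integral_def
proof (rule integral_cong_AE)
  have "(\<lambda>x. indicator B x *\<^sub>R f x) = (\<lambda>x. indicator B x * (indicator A x * f x))"
    using B by (auto simp: indicator_def fun_eq_iff)
  then show "(\<lambda>x. indicator B x *\<^sub>R f x) \<in> borel_measurable lborel" using m B by simp
  show "(\<lambda>x. indicator A x *\<^sub>R f x) \<in> borel_measurable lborel" using m by simp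
  show "AE x in lborel. indicator B x *\<^sub>R f x = indicator A x *\<^sub>R f x"
    using ae by eventually_elim (use B in \<open>auto simp: indicator_def\<close>)
qed

theorem proposition2:
  fixes a1 a2 a3 a4 a5 b \<beta>vh m \<tau>h \<tau>v \<mu>v z0 y0 ystar :: real
    and g \<beta>hv :: "real \<Rightarrow> real"
    and S E Ev Iv :: "real \<Rightarrow> real"
    and I :: "real \<Rightarrow> real \<Rightarrow> real \<Rightarrow> real"
    and R :: "real \<Rightarrow> real \<Rightarrow> real"
  assumes pos: "a1 > 0" "a2 > 0" "a3 > 0" "a4 > 0" "a5 > 0" "b > 0" "\<beta>vh > 0" "m > 0"
      "\<tau>h > 0" "\<tau>v > 0" "\<mu>v > 0" "z0 > 0"
    and y0_def: "y0 = z0 * a1 / a2"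
    (* g is a probability density on [0,y0] with mean ystar in (0,y0) *)
    and g_nonneg: "\<And>y. y \<in> {0..y0} \<Longrightarrow> g y \<ge> 0"
    and g_int: "set_integrable lborel {0..y0} g"
    and g_mass: "(LBINT y:{0..y0}. g y) = 1"
    and ystar_def: "ystar = (LBINT y:{0..y0}. y * g y)"
    and ystar_range: "0 < ystar" "ystar < y0"
    (* regularity of I: continuous up to the boundary (except the corner z=z0,y=0),
       C^1 in the interior *)
    and I_cont: "continuous_on {(t, z, y). t > 0 \<and> z \<ge> z0 \<and> y \<ge> 0 \<and> (z, y) \<noteq> (z0, 0)}
                   (\<lambda>(t, z, y). I t z y)"
    and I_diff: "\<And>t z y. t > 0 \<Longrightarrow> z > z0 \<Longrightarrow> y > 0 \<Longrightarrow>
                   (\<lambda>s. I s z y) differentiable (at t) \<and>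
                   (\<lambda>w. I t w y) differentiable (at z) \<and>
                   (\<lambda>w. I t z w) differentiable (at y)"
    and I_C1: "continuous_on ({0<..} \<times> {z0<..} \<times> {0<..}) (\<lambda>(t, z, y). deriv (\<lambda>s. I s z y) t)"
              "continuous_on ({0<..} \<times> {z0<..} \<times> {0<..}) (\<lambda>(t, z, y). deriv (\<lambda>w. I t w y) z)"
              "continuous_on ({0<..} \<times> {z0<..} \<times> {0<..}) (\<lambda>(t, z, y). deriv (\<lambda>w. I t z w) y)"
    (* the transport equation for I *)
    and I_pde: "\<And>t z y. t > 0 \<Longrightarrow> z > z0 \<Longrightarrow> y > 0 \<Longrightarrow>
                   deriv (\<lambda>s. I s z y) t
                 + deriv (\<lambda>w. (a1 * w - a2 * y) * I t w y) z
                 + deriv (\<lambda>w. (- a3 * w + a4 * z) * I t z w) y = 0"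
    (* regularity of R *)
    and R_cont: "continuous_on {(t, y). t > 0 \<and> y \<ge> y0} (\<lambda>(t, y). R t y)"
    and R_diff: "\<And>t y. t > 0 \<Longrightarrow> y > y0 \<Longrightarrow>
                   (\<lambda>s. R s y) differentiable (at t) \<and> (\<lambda>w. R t w) differentiable (at y)"
    and R_C1: "continuous_on ({0<..} \<times> {y0<..}) (\<lambda>(t, y). deriv (\<lambda>s. R s y) t)"
              "continuous_on ({0<..} \<times> {y0<..}) (\<lambda>(t, y). deriv (\<lambda>w. R t w) y)"
    (* the equation for R *)
    and R_pde: "\<And>t y. t > 0 \<Longrightarrow> y > y0 \<Longrightarrow>
                   deriv (\<lambda>s. R s y) t - deriv (\<lambda>w. a5 * w * R t w) y
                 = - I t z0 y * (a1 * z0 - a2 * y)"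
    (* the ODEs *)
    and S_ode: "\<And>t. t > 0 \<Longrightarrow>
                 (S has_real_derivative (- b * \<beta>vh * m * Iv t * S t + a5 * y0 * R t y0)) (at t)"
    and E_ode: "\<And>t. t > 0 \<Longrightarrow>
                 (E has_real_derivative (b * \<beta>vh * m * Iv t * S t - E t / \<tau>h)) (at t)"
    and Ev_ode: "\<And>t. t > 0 \<Longrightarrow>
                 (Ev has_real_derivative
                    (b * (LBINT y:{0..}. LBINT z:{z0..}. I t z y * \<beta>hv z) * (1 - Ev t - Iv t)
                     - (1 / \<tau>v + \<mu>v) * Ev t)) (at t)"
    and Iv_ode: "\<And>t. t > 0 \<Longrightarrow>
                 (Iv has_real_derivative (Ev t / \<tau>v - \<mu>v * Iv t)) (at t)"
    (* boundary conditions *)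
    and I_bc_z0: "\<And>t y. t > 0 \<Longrightarrow> y \<in> {0..y0} \<Longrightarrow>
                   I t z0 y = E t * g y / ((a1 * z0 - a2 * ystar) * \<tau>h)"
    and I_bc_y0: "\<And>t z. t > 0 \<Longrightarrow> z > z0 \<Longrightarrow> I t z 0 = 0"
    (* decay at infinity, sufficiently fast (locally uniformly in t) *)
    and I_decay: "\<And>t1 t2. 0 < t1 \<Longrightarrow> t1 \<le> t2 \<Longrightarrow> \<exists>C. \<forall>t z y.
                   t \<in> {t1..t2} \<and> z > z0 \<and> y > 0 \<longrightarrow>
                     \<bar>I t z y\<bar> \<le> C / (1 + z\<^sup>2 + y\<^sup>2)\<^sup>2 \<and>
                     \<bar>deriv (\<lambda>s. I s z y) t\<bar> \<le> C / (1 + z\<^sup>2 + y\<^sup>2)\<^sup>2 \<and>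
                     \<bar>deriv (\<lambda>w. I t w y) z\<bar> \<le> C / (1 + z\<^sup>2 + y\<^sup>2)\<^sup>2 \<and>
                     \<bar>deriv (\<lambda>w. I t z w) y\<bar> \<le> C / (1 + z\<^sup>2 + y\<^sup>2)\<^sup>2"
    and R_decay: "\<And>t1 t2. 0 < t1 \<Longrightarrow> t1 \<le> t2 \<Longrightarrow> \<exists>C. \<forall>t y.
                   t \<in> {t1..t2} \<and> y > y0 \<longrightarrow>
                     \<bar>R t y\<bar> \<le> C / (1 + y\<^sup>2)\<^sup>2 \<and>
                     \<bar>deriv (\<lambda>s. R s y) t\<bar> \<le> C / (1 + y\<^sup>2)\<^sup>2 \<and>
                     \<bar>deriv (\<lambda>w. R t w) y\<bar> \<le> C / (1 + y\<^sup>2)\<^sup>2"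
  shows "\<And>t. t > 0 \<Longrightarrow>
           ((\<lambda>t. S t + E t + (LBINT y:{0..}. LBINT z:{z0..}. I t z y) + (LBINT y:{y0..}. R t y))
              has_real_derivative 0) (at t)"
proof -
  fix t :: real
  assume t: "t > 0"
  let ?It = "\<lambda>s z y. deriv (\<lambda>s. I s z y) s"
  let ?Iz = "\<lambda>s z y. deriv (\<lambda>w. I s w y) z"
  let ?Iy = "\<lambda>s z y. deriv (\<lambda>w. I s z w) y"
  let ?Rt = "\<lambda>s y. deriv (\<lambda>s. R s y) s"
  let ?Ry = "\<lambda>s y. deriv (\<lambda>w. R s w) y"
  let ?P = "\<lambda>s y. LBINT z:{z0<..}. I s z y"
  let ?Q = "\<lambda>s y. LBINT z:{z0<..}. ?It s z y"
  let ?Pint = "\<lambda>s. LBINT y:{0<..}. ?P s y"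
  let ?Rint = "\<lambda>s. LBINT y:{y0<..}. R s y"
  let ?Fb = "\<lambda>y. (a1 * z0 - a2 * y) * I t z0 y"
  let ?Dz = "\<lambda>z y. deriv (\<lambda>w. (a1 * w - a2 * y) * I t w y) z"
  let ?Dy = "\<lambda>z y. deriv (\<lambda>w. (- a3 * w + a4 * z) * I t z w) y"
  let ?Kd = "\<lambda>y. LBINT z:{z0<..}. ?Dy z y"
  let ?A = "LBINT z::real. 1 / (1 + z\<^sup>2)"
  have y0pos: "y0 > 0" using pos y0_def by simp
  obtain C where C: "\<And>s z y. s \<in> {t/2..2*t} \<Longrightarrow> z > z0 \<Longrightarrow> y > 0 \<Longrightarrow>
                     \<bar>I s z y\<bar> \<le> C / (1 + z\<^sup>2 + y\<^sup>2)\<^sup>2 \<and>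
                     \<bar>?It s z y\<bar> \<le> C / (1 + z\<^sup>2 + y\<^sup>2)\<^sup>2 \<and>
                     \<bar>?Iz s z y\<bar> \<le> C / (1 + z\<^sup>2 + y\<^sup>2)\<^sup>2 \<and>
                     \<bar>?Iy s z y\<bar> \<le> C / (1 + z\<^sup>2 + y\<^sup>2)\<^sup>2"
    using I_decay[of "t/2" "2*t"] t by auto
  obtain CR where CR: "\<And>s y. s \<in> {t/2..2*t} \<Longrightarrow> y > y0 \<Longrightarrow>
                     \<bar>R s y\<bar> \<le> CR / (1 + y\<^sup>2)\<^sup>2 \<and>
                     \<bar>?Rt s y\<bar> \<le> CR / (1 + y\<^sup>2)\<^sup>2 \<and>
                     \<bar>?Ry s y\<bar> \<le> CR / (1 + y\<^sup>2)\<^sup>2"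
    using R_decay[of "t/2" "2*t"] t by auto
  have tin: "t \<in> {t/2..2*t}" using t by auto
  have C0: "C \<ge> 0"
  proof -
    have "0 \<le> C / (1 + (z0+1)\<^sup>2 + 1\<^sup>2)\<^sup>2" using C[of t "z0+1" 1] tin by (meson abs_ge_zero order_trans less_add_one zero_less_one)
    then show ?thesis using pos3(1)[of "z0+1" 1] by (simp add: zero_le_divide_iff del: power_one)
  qed
  have CR0: "CR \<ge> 0"
  proof -
    have "0 \<le> CR / (1 + (y0+1)\<^sup>2)\<^sup>2" using CR[of t "y0+1"] tin by (meson abs_ge_zero order_trans less_add_one)
    moreover have "1 + (y0 + 1)\<^sup>2 \<noteq> 0" using pos3(3)[of "y0+1" 0] by simp
    ultimately show ?thesis by (simp add: zero_le_divide_iff)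
  qed
  have ball_sub: "s \<in> {t/2..2*t} \<and> s > 0" if "s \<in> ball t (t/2)" for s
  proof -
    have "\<bar>t - s\<bar> < t/2" using that by (simp add: dist_real_def)
    then have "t - s < t/2 \<and> -(t - s) < t/2" by (rule abs_less_iff[THEN iffD1])
    then show ?thesis using t by auto
  qed

  have c1: "continuous_on {z0..} (\<lambda>z. I s z y)" if "s > 0" "y > 0" for s y
  proof -
    have "continuous_on {z0..} (\<lambda>z. (\<lambda>(t, z, y). I t z y) (s, z, y))"
      by (rule continuous_on_compose2[OF I_cont]) (use that in \<open>auto intro!: continuous_intros\<close>)
    then show ?thesis by simp
  qed
  have c1o: "continuous_on {z0<..} (\<lambda>z. I s z y)" if "s > 0" "y > 0" for s y
    by (rule continuous_on_subset[OF c1[OF that]]) auto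
  have c2: "continuous_on {0..} (\<lambda>y. I s z y)" if "s > 0" "z > z0" for s z
  proof -
    have "continuous_on {0..} (\<lambda>y. (\<lambda>(t, z, y). I t z y) (s, z, y))"
      by (rule continuous_on_compose2[OF I_cont]) (use that pos in \<open>auto intro!: continuous_intros\<close>)
    then show ?thesis by simp
  qed
  have c3: "continuous_on {0<..} (\<lambda>y. I s z0 y)" if "s > 0" for s
  proof -
    have "continuous_on {0<..} (\<lambda>y. (\<lambda>(t, z, y). I t z y) (s, z0, y))"
      by (rule continuous_on_compose2[OF I_cont]) (use that pos in \<open>auto intro!: continuous_intros\<close>)
    then show ?thesis by simp
  qed
  have c4: "continuous_on ({0<..} \<times> {z0<..}) (\<lambda>(y, z). I s z y)" if "s > 0" for s
  proof -
    have "continuous_on ({0<..} \<times> {z0<..}) (\<lambda>p. (\<lambda>(t, z, y). I t z y) (s, snd p, fst p))"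
      by (rule continuous_on_compose2[OF I_cont]) (use that pos in \<open>auto intro!: continuous_intros\<close>)
    then show ?thesis by (simp add: case_prod_beta)
  qed
  have c5: "continuous_on ({0<..} \<times> {z0<..}) (\<lambda>(y, z). ?It s z y)" if "s > 0" for s
  proof -
    have "continuous_on ({0<..} \<times> {z0<..}) (\<lambda>p. (\<lambda>(t, z, y). ?It t z y) (s, snd p, fst p))"
      by (rule continuous_on_compose2[OF I_C1(1)]) (use that pos in \<open>auto intro!: continuous_intros\<close>)
    then show ?thesis by (simp add: case_prod_beta)
  qed
  have c6: "continuous_on {z0<..} (\<lambda>z. ?Iz t z y)" if "y > 0" for y
  proof -
    have "continuous_on {z0<..} (\<lambda>z. (\<lambda>(t, z, y). ?Iz t z y) (t, z, y))"
      by (rule continuous_on_compose2[OF I_C1(2)]) (use that t in \<open>auto intro!: continuous_intros\<close>)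
    then show ?thesis by simp
  qed
  have c7: "continuous_on {z0<..} (\<lambda>z. ?Iy t z y)" if "y > 0" for y
  proof -
    have "continuous_on {z0<..} (\<lambda>z. (\<lambda>(t, z, y). ?Iy t z y) (t, z, y))"
      by (rule continuous_on_compose2[OF I_C1(3)]) (use that t in \<open>auto intro!: continuous_intros\<close>)
    then show ?thesis by simp
  qed
  have cR1: "continuous_on {y0..} (\<lambda>y. R s y)" if "s > 0" for s
  proof -
    have "continuous_on {y0..} (\<lambda>y. (\<lambda>(t, y). R t y) (s, y))"
      by (rule continuous_on_compose2[OF R_cont]) (use that in \<open>auto intro!: continuous_intros\<close>)
    then show ?thesis by simp
  qed
  have cR2: "continuous_on {y0<..} (\<lambda>y. ?Rt s y)" if "s > 0" for s
  proof -
    have "continuous_on {y0<..} (\<lambda>y. (\<lambda>(t, y). ?Rt t y) (s, y))"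
      by (rule continuous_on_compose2[OF R_C1(1)]) (use that in \<open>auto intro!: continuous_intros\<close>)
    then show ?thesis by simp
  qed
  have cR3: "continuous_on {y0<..} (\<lambda>y. ?Ry t y)"
  proof -
    have "continuous_on {y0<..} (\<lambda>y. (\<lambda>(t, y). ?Ry t y) (t, y))"
      by (rule continuous_on_compose2[OF R_C1(2)]) (use t in \<open>auto intro!: continuous_intros\<close>)
    then show ?thesis by simp
  qed
  have c8: "continuous_on {z0<..} (\<lambda>z. ?It s z y)" if "s > 0" "y > 0" for s y
  proof -
    have "continuous_on {z0<..} (\<lambda>z. (\<lambda>(t, z, y). ?It t z y) (s, z, y))"
      by (rule continuous_on_compose2[OF I_C1(1)]) (use that in \<open>auto intro!: continuous_intros\<close>)
    then show ?thesis by simp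
  qed
  have Bz0: "\<bar>I t z0 y\<bar> \<le> C / (1 + z0\<^sup>2 + y\<^sup>2)\<^sup>2" if y: "y > 0" for y
  proof -
    have "continuous (at z0 within {z0..}) (\<lambda>z. I t z y)"
      using c1[OF t y] by (simp add: continuous_on_eq_continuous_within)
    then have "((\<lambda>z. I t z y) \<longlongrightarrow> I t z0 y) (at_right z0)"
      by (simp add: continuous_within at_within_Ici_at_right)
    then have l1: "((\<lambda>z. \<bar>I t z y\<bar>) \<longlongrightarrow> \<bar>I t z0 y\<bar>) (at_right z0)" by (rule tendsto_rabs)
    have l2: "((\<lambda>z. C / (1 + z\<^sup>2 + y\<^sup>2)\<^sup>2) \<longlongrightarrow> C / (1 + z0\<^sup>2 + y\<^sup>2)\<^sup>2) (at_right z0)"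
      using pos3(3)[of z0 y] by (intro tendsto_intros) auto
    have ev: "\<forall>\<^sub>F z in at_right z0. \<bar>I t z y\<bar> \<le> C / (1 + z\<^sup>2 + y\<^sup>2)\<^sup>2"
      using eventually_at_right_less[of z0] by eventually_elim (use C[OF tin _ y] in auto)
    show ?thesis by (rule tendsto_le[OF trivial_limit_at_right_real l2 l1 ev])
  qed
  have innerD: "((\<lambda>s. ?P s y) has_real_derivative ?Q s y) (at s)" if s: "s \<in> ball t (t/2)" and y: "y > 0" for s y
  proof -
    define d where "d = t/2 - \<bar>s - t\<bar>"
    have d: "d > 0" using s by (auto simp: d_def dist_real_def abs_minus_commute)
    have bs: "s' \<in> {t/2..2*t} \<and> s' > 0" if "s' \<in> ball s d" for s'
      using ball_sub[of s'] that s by (auto simp: d_def dist_real_def)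
    have "((\<lambda>s. integral\<^sup>L lborel (\<lambda>z. indicator {z0<..} z *\<^sub>R I s z y)) has_real_derivative
            integral\<^sup>L lborel (\<lambda>z. indicator {z0<..} z *\<^sub>R ?It s z y)) (at s)"
    proof (rule diff_int[where d=d and w="\<lambda>z. (C / (1 + y\<^sup>2)) / (1 + z\<^sup>2)"])
      show "0 < d" by fact
      show "(\<lambda>z. indicator {z0<..} z *\<^sub>R I s' z y) \<in> borel_measurable lborel" if "s' \<in> ball s d" for s'
        using meas1[of "{z0<..}" "\<lambda>z. I s' z y"] c1o[of s' y] bs[OF that] y by auto
      show "(\<lambda>z. indicator {z0<..} z *\<^sub>R ?It s z y) \<in> borel_measurable lborel"
        using meas1[of "{z0<..}" "\<lambda>z. ?It s z y"] c8[of s y] bs[of s] d y by auto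
      show "integrable lborel (\<lambda>z. (C / (1 + y\<^sup>2)) / (1 + z\<^sup>2))" by (rule int_inv)
      show "integrable lborel (\<lambda>z. indicator {z0<..} z *\<^sub>R I s z y)"
      proof (rule Bochner_Integration.integrable_bound[OF int_inv[of "C / (1 + y\<^sup>2)"]])
        show "(\<lambda>z. indicator {z0<..} z *\<^sub>R I s z y) \<in> borel_measurable lborel"
          using meas1[of "{z0<..}" "\<lambda>z. I s z y"] c1o[of s y] bs[of s] d y by auto
        show "AE z in lborel. norm (indicator {z0<..} z *\<^sub>R I s z y) \<le> norm ((C / (1 + y\<^sup>2)) / (1 + z\<^sup>2))"
        proof (rule AE_I2)
          fix z
          show "norm (indicator {z0<..} z *\<^sub>R I s z y) \<le> norm ((C / (1 + y\<^sup>2)) / (1 + z\<^sup>2))"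
          proof (cases "z > z0")
            case True
            have "\<bar>I s z y\<bar> \<le> C / (1 + y\<^sup>2) * (1 / (1 + z\<^sup>2))"
              by (rule lb_prod) (use C[of s z y] bs[of s] d True y in auto)
            then show ?thesis using True C0 by (auto simp: indicator_def)
          qed (simp add: indicator_def)
        qed
      qed
      show "AE z in lborel. \<forall>s'\<in>ball s d. ((\<lambda>s. indicator {z0<..} z *\<^sub>R I s z y) has_real_derivative
              indicator {z0<..} z *\<^sub>R ?It s' z y) (at s') \<and>
              \<bar>indicator {z0<..} z *\<^sub>R ?It s' z y\<bar> \<le> (C / (1 + y\<^sup>2)) / (1 + z\<^sup>2)"
      proof (rule AE_I2, intro ballI conjI)
        fix z s' assume s': "s' \<in> ball s d"
        show "((\<lambda>s. indicator {z0<..} z *\<^sub>R I s z y) has_real_derivative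
              indicator {z0<..} z *\<^sub>R ?It s' z y) (at s')"
        proof (cases "z > z0")
          case True
          have "(\<lambda>s. I s z y) differentiable (at s')" using I_diff[of s' z y] bs[OF s'] True y by auto
          then show ?thesis using True by (simp add: DERIV_deriv_iff_real_differentiable)
        qed (simp add: indicator_def)
        show "\<bar>indicator {z0<..} z *\<^sub>R ?It s' z y\<bar> \<le> (C / (1 + y\<^sup>2)) / (1 + z\<^sup>2)"
        proof (cases "z > z0")
          case True
          have "\<bar>?It s' z y\<bar> \<le> C / (1 + y\<^sup>2) * (1 / (1 + z\<^sup>2))"
            by (rule lb_prod) (use C[of s' z y] bs[OF s'] True y in auto)
          then show ?thesis using True by (auto simp: indicator_def)
        next
          case False
          then show ?thesis using False C0 by (auto simp: indicator_def add_pos_nonneg)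
        qed
      qed
    qed
    then show ?thesis by (simp add: set_lebesgue_integral_def)
  qed
  have A0: "?A \<ge> 0" by (intro integral_nonneg_AE) (auto simp: add_pos_nonneg)
  have cR1o: "continuous_on {y0<..} (\<lambda>y. R s y)" if "s > 0" for s
    by (rule continuous_on_subset[OF cR1[OF that]]) auto
  have Qb: "\<bar>?Q s y\<bar> \<le> C * ?A / (1 + y\<^sup>2)" if "s \<in> {t/2..2*t}" "y > 0" for s y
  proof -
    have "\<bar>?Q s y\<bar> \<le> C / (1 + y\<^sup>2) * ?A"
      by (rule bnd_int) (rule lb_prod, use C[of s _ y] that in auto)
    then show ?thesis by simp
  qed
  have Pb: "\<bar>?P s y\<bar> \<le> C * ?A / (1 + y\<^sup>2)" if "s \<in> {t/2..2*t}" "y > 0" for s y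
  proof -
    have "\<bar>?P s y\<bar> \<le> C / (1 + y\<^sup>2) * ?A"
      by (rule bnd_int) (rule lb_prod, use C[of s _ y] that in auto)
    then show ?thesis by simp
  qed
  have mP: "(\<lambda>y. indicator {0<..} y * ?P s y) \<in> borel_measurable lborel" if "s > 0" for s
    using meas2[of "{0<..}" "{z0<..}" "\<lambda>y z. I s z y"] c4[OF that] by simp
  have mQ: "(\<lambda>y. indicator {0<..} y * ?Q s y) \<in> borel_measurable lborel" if "s > 0" for s
    using meas2[of "{0<..}" "{z0<..}" "\<lambda>y z. ?It s z y"] c5[OF that] by simp
  have Q_int: "set_integrable lborel {0<..} (?Q t)"
    by (rule set_int_bound[OF mQ[OF t]]) (use Qb[OF tin] in auto)
  have dP: "(?Pint has_real_derivative (LBINT y:{0<..}. ?Q t y)) (at t)"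
  proof -
    have "((\<lambda>s. integral\<^sup>L lborel (\<lambda>y. indicator {0<..} y *\<^sub>R ?P s y)) has_real_derivative
            integral\<^sup>L lborel (\<lambda>y. indicator {0<..} y *\<^sub>R ?Q t y)) (at t)"
    proof (rule diff_int[where d="t/2" and w="\<lambda>y. C * ?A / (1 + y\<^sup>2)"])
      show "0 < t/2" using t by simp
      show "(\<lambda>y. indicator {0<..} y *\<^sub>R ?P s y) \<in> borel_measurable lborel" if "s \<in> ball t (t/2)" for s
        using mP[of s] ball_sub[OF that] by simp
      show "(\<lambda>y. indicator {0<..} y *\<^sub>R ?Q t y) \<in> borel_measurable lborel"
        using mQ[OF t] by simp
      show "integrable lborel (\<lambda>y. C * ?A / (1 + y\<^sup>2))" by (rule int_inv)
      show "integrable lborel (\<lambda>y. indicator {0<..} y *\<^sub>R ?P t y)"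
        using set_int_bound[OF mP[OF t], of "C * ?A"] Pb[OF tin] by (simp add: set_integrable_def)
      show "AE y in lborel. \<forall>s\<in>ball t (t/2). ((\<lambda>s. indicator {0<..} y *\<^sub>R ?P s y) has_real_derivative
              indicator {0<..} y *\<^sub>R ?Q s y) (at s) \<and>
              \<bar>indicator {0<..} y *\<^sub>R ?Q s y\<bar> \<le> C * ?A / (1 + y\<^sup>2)"
      proof (rule AE_I2, intro ballI conjI)
        fix y s assume s: "s \<in> ball t (t/2)"
        show "((\<lambda>s. indicator {0<..} y *\<^sub>R ?P s y) has_real_derivative
              indicator {0<..} y *\<^sub>R ?Q s y) (at s)"
        proof (cases "y > 0")
          case True
          then show ?thesis using innerD[OF s True] by simp
        qed (simp add: indicator_def)
        show "\<bar>indicator {0<..} y *\<^sub>R ?Q s y\<bar> \<le> C * ?A / (1 + y\<^sup>2)"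
        proof (cases "y > 0")
          case True
          then show ?thesis using Qb[of s y] ball_sub[OF s] by simp
        qed (use C0 A0 in \<open>simp add: indicator_def add_pos_nonneg\<close>)
      qed
    qed
    then show ?thesis by (simp add: set_lebesgue_integral_def)
  qed
  have eqP: "(LBINT y:{0..}. LBINT z:{z0..}. I s z y) = ?Pint s" if s: "s > 0" for s
  proof (rule conv_Ici)
    show "(\<lambda>y. indicator {0<..} y * ?P s y) \<in> borel_measurable lborel" by (rule mP[OF s])
    show "(LBINT z:{z0..}. I s z y) = ?P s y" if "y > 0" for y
      by (rule conv_Ici) (use meas1[of "{z0<..}" "\<lambda>z. I s z y"] c1o[OF s that] in auto)
  qed
  have mR: "(\<lambda>y. indicator {y0<..} y * R s y) \<in> borel_measurable lborel" if "s > 0" for s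
    using meas1[of "{y0<..}" "\<lambda>y. R s y"] cR1o[OF that] by simp
  have mRt: "(\<lambda>y. indicator {y0<..} y * ?Rt s y) \<in> borel_measurable lborel" if "s > 0" for s
    using meas1[of "{y0<..}" "\<lambda>y. ?Rt s y"] cR2[OF that] by simp
  have eqR: "(LBINT y:{y0..}. R s y) = ?Rint s" if s: "s > 0" for s
    by (rule conv_Ici[OF mR[OF s]]) simp
  have Rt_int: "set_integrable lborel {y0<..} (?Rt t)"
    by (rule set_int_bound[OF mRt[OF t]]) (use CR[OF tin] in \<open>auto intro: lb1\<close>)
  have dR: "(?Rint has_real_derivative (LBINT y:{y0<..}. ?Rt t y)) (at t)"
  proof -
    have "((\<lambda>s. integral\<^sup>L lborel (\<lambda>y. indicator {y0<..} y *\<^sub>R R s y)) has_real_derivative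
            integral\<^sup>L lborel (\<lambda>y. indicator {y0<..} y *\<^sub>R ?Rt t y)) (at t)"
    proof (rule diff_int[where d="t/2" and w="\<lambda>y. CR / (1 + y\<^sup>2)"])
      show "0 < t/2" using t by simp
      show "(\<lambda>y. indicator {y0<..} y *\<^sub>R R s y) \<in> borel_measurable lborel" if "s \<in> ball t (t/2)" for s
        using mR[of s] ball_sub[OF that] by simp
      show "(\<lambda>y. indicator {y0<..} y *\<^sub>R ?Rt t y) \<in> borel_measurable lborel"
        using mRt[OF t] by simp
      show "integrable lborel (\<lambda>y. CR / (1 + y\<^sup>2))" by (rule int_inv)
      show "integrable lborel (\<lambda>y. indicator {y0<..} y *\<^sub>R R t y)"
        using set_int_bound[OF mR[OF t], of CR] CR[OF tin] by (auto simp: set_integrable_def intro: lb1)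
      show "AE y in lborel. \<forall>s\<in>ball t (t/2). ((\<lambda>s. indicator {y0<..} y *\<^sub>R R s y) has_real_derivative
              indicator {y0<..} y *\<^sub>R ?Rt s y) (at s) \<and>
              \<bar>indicator {y0<..} y *\<^sub>R ?Rt s y\<bar> \<le> CR / (1 + y\<^sup>2)"
      proof (rule AE_I2, intro ballI conjI)
        fix y s assume s: "s \<in> ball t (t/2)"
        show "((\<lambda>s. indicator {y0<..} y *\<^sub>R R s y) has_real_derivative
              indicator {y0<..} y *\<^sub>R ?Rt s y) (at s)"
        proof (cases "y > y0")
          case True
          have "(\<lambda>s. R s y) differentiable (at s)" using R_diff[of s y] ball_sub[OF s] True by auto
          then show ?thesis using True by (simp add: DERIV_deriv_iff_real_differentiable)
        qed (simp add: indicator_def)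
        show "\<bar>indicator {y0<..} y *\<^sub>R ?Rt s y\<bar> \<le> CR / (1 + y\<^sup>2)"
        proof (cases "y > y0")
          case True
          then show ?thesis using CR[of s y] ball_sub[OF s] by (auto intro: lb1)
        qed (use CR0 in \<open>simp add: indicator_def add_pos_nonneg\<close>)
      qed
    qed
    then show ?thesis by (simp add: set_lebesgue_integral_def)
  qed
  have mFb: "(\<lambda>y. indicator {0<..} y * ?Fb y) \<in> borel_measurable lborel"
    by (rule meas1) (use c3[OF t] in \<open>auto intro!: continuous_intros\<close>)
  have Fbb: "\<bar>?Fb y\<bar> \<le> (\<bar>a1 * z0\<bar> + \<bar>a2\<bar>) * C / (1 + y\<^sup>2)" if y: "y > 0" for y
  proof -
    have "\<bar>(a1 * z0 + (- a2) * y + 0 * z0) * I t z0 y\<bar> \<le> (\<bar>a1 * z0\<bar> + \<bar>- a2\<bar> + \<bar>0\<bar>) * C / (1 + y\<^sup>2)"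
      by (rule lb'[OF Bz0[OF y]]) (use y pos in auto)
    then show ?thesis by simp
  qed
  have Fb_int: "set_integrable lborel {0<..} ?Fb"
    by (rule set_int_bound[OF mFb]) (use Fbb in auto)
  have Dz_eq: "?Dz z y = a1 * I t z y + (a1 * z - a2 * y) * ?Iz t z y"
    and Dz_der: "((\<lambda>w. (a1 * w - a2 * y) * I t w y) has_real_derivative ?Dz z y) (at z)"
    if "z > z0" "y > 0" for z y
  proof -
    have dI: "(\<lambda>w. I t w y) differentiable (at z)" using I_diff[OF t that] by auto
    have dc: "((\<lambda>w. a1 * w - a2 * y) has_real_derivative a1) (at z)"
      by (auto intro!: derivative_eq_intros)
    show "?Dz z y = a1 * I t z y + (a1 * z - a2 * y) * ?Iz t z y"
      using deriv_prod_lin(2)[OF dc dI] by simp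
    show "((\<lambda>w. (a1 * w - a2 * y) * I t w y) has_real_derivative ?Dz z y) (at z)"
      using deriv_prod_lin[OF dc dI] by simp
  qed
  have Dy_eq: "?Dy z y = - a3 * I t z y + (- a3 * y + a4 * z) * ?Iy t z y"
    and Dy_der: "((\<lambda>w. (- a3 * w + a4 * z) * I t z w) has_real_derivative ?Dy z y) (at y)"
    if "z > z0" "y > 0" for z y
  proof -
    have dI: "(\<lambda>w. I t z w) differentiable (at y)" using I_diff[OF t that] by auto
    have dc: "((\<lambda>w. - a3 * w + a4 * z) has_real_derivative - a3) (at y)"
      by (auto intro!: derivative_eq_intros)
    show "?Dy z y = - a3 * I t z y + (- a3 * y + a4 * z) * ?Iy t z y"
      using deriv_prod_lin(2)[OF dc dI] by simp
    show "((\<lambda>w. (- a3 * w + a4 * z) * I t z w) has_real_derivative ?Dy z y) (at y)"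
      using deriv_prod_lin[OF dc dI] by simp
  qed
  have Dz_int: "set_integrable lborel {z0<..} (\<lambda>z. ?Dz z y)" if y: "y > 0" for y
  proof (rule set_int_bound)
    have "(\<lambda>z. indicator {z0<..} z * (a1 * I t z y + (a1 * z - a2 * y) * ?Iz t z y)) \<in> borel_measurable lborel"
      by (rule meas1) (use c1o[OF t y] c6[OF y] in \<open>auto intro!: continuous_intros\<close>)
    moreover have "(\<lambda>z. indicator {z0<..} z * (a1 * I t z y + (a1 * z - a2 * y) * ?Iz t z y)) =
                   (\<lambda>z. indicator {z0<..} z * ?Dz z y)"
      using Dz_eq[OF _ y] by (auto simp: fun_eq_iff indicator_def)
    ultimately show "(\<lambda>z. indicator {z0<..} z * ?Dz z y) \<in> borel_measurable lborel" by simp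
    show "\<bar>?Dz z y\<bar> \<le> (\<bar>a1\<bar> + (\<bar>a1\<bar> + \<bar>a2\<bar>)) * C / (1 + z\<^sup>2)" if z: "z \<in> {z0<..}" for z
    proof -
      have z': "z > z0" "z \<ge> 0" using z pos by auto
      have b1: "\<bar>(a1 + 0 * z + 0 * y) * I t z y\<bar> \<le> (\<bar>a1\<bar> + \<bar>0\<bar> + \<bar>0\<bar>) * C / (1 + z\<^sup>2)"
        by (rule lb) (use C[OF tin z'(1) y] z' y in auto)
      have b2: "\<bar>(0 + a1 * z + (- a2) * y) * ?Iz t z y\<bar> \<le> (\<bar>0\<bar> + \<bar>a1\<bar> + \<bar>- a2\<bar>) * C / (1 + z\<^sup>2)"
        by (rule lb) (use C[OF tin z'(1) y] z' y in auto)
      have "\<bar>?Dz z y\<bar> \<le> \<bar>a1 * I t z y\<bar> + \<bar>(a1 * z - a2 * y) * ?Iz t z y\<bar>"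
        unfolding Dz_eq[OF z'(1) y] by (rule abs_triangle_ineq)
      also have "\<dots> \<le> \<bar>a1\<bar> * C / (1 + z\<^sup>2) + (\<bar>a1\<bar> + \<bar>a2\<bar>) * C / (1 + z\<^sup>2)"
        using b1 b2 by (intro add_mono) simp_all
      also have "\<dots> = (\<bar>a1\<bar> + (\<bar>a1\<bar> + \<bar>a2\<bar>)) * C / (1 + z\<^sup>2)" by (simp add: add_divide_distrib algebra_simps)
      finally show ?thesis .
    qed
  qed
  have Dy_int: "set_integrable lborel {z0<..} (\<lambda>z. ?Dy z y)" if y: "y > 0" for y
  proof (rule set_int_bound)
    have "(\<lambda>z. indicator {z0<..} z * (- a3 * I t z y + (- a3 * y + a4 * z) * ?Iy t z y)) \<in> borel_measurable lborel"
      by (rule meas1) (use c1o[OF t y] c7[OF y] in \<open>auto intro!: continuous_intros\<close>)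
    moreover have "(\<lambda>z. indicator {z0<..} z * (- a3 * I t z y + (- a3 * y + a4 * z) * ?Iy t z y)) =
                   (\<lambda>z. indicator {z0<..} z * ?Dy z y)"
      using Dy_eq[OF _ y] by (auto simp: fun_eq_iff indicator_def)
    ultimately show "(\<lambda>z. indicator {z0<..} z * ?Dy z y) \<in> borel_measurable lborel" by simp
    show "\<bar>?Dy z y\<bar> \<le> (\<bar>a3\<bar> + (\<bar>a4\<bar> + \<bar>a3\<bar>)) * C / (1 + z\<^sup>2)" if z: "z \<in> {z0<..}" for z
    proof -
      have z': "z > z0" "z \<ge> 0" using z pos by auto
      have b1: "\<bar>(- a3 + 0 * z + 0 * y) * I t z y\<bar> \<le> (\<bar>- a3\<bar> + \<bar>0\<bar> + \<bar>0\<bar>) * C / (1 + z\<^sup>2)"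
        by (rule lb) (use C[OF tin z'(1) y] z' y in auto)
      have b2: "\<bar>(0 + a4 * z + (- a3) * y) * ?Iy t z y\<bar> \<le> (\<bar>0\<bar> + \<bar>a4\<bar> + \<bar>- a3\<bar>) * C / (1 + z\<^sup>2)"
        by (rule lb) (use C[OF tin z'(1) y] z' y in auto)
      have "\<bar>?Dy z y\<bar> \<le> \<bar>- a3 * I t z y\<bar> + \<bar>(- a3 * y + a4 * z) * ?Iy t z y\<bar>"
        unfolding Dy_eq[OF z'(1) y] by (rule abs_triangle_ineq)
      also have "\<dots> \<le> \<bar>a3\<bar> * C / (1 + z\<^sup>2) + (\<bar>a4\<bar> + \<bar>a3\<bar>) * C / (1 + z\<^sup>2)"
        using b1 b2 by (intro add_mono) (simp_all add: algebra_simps)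
      also have "\<dots> = (\<bar>a3\<bar> + (\<bar>a4\<bar> + \<bar>a3\<bar>)) * C / (1 + z\<^sup>2)" by (simp add: add_divide_distrib algebra_simps)
      finally show ?thesis .
    qed
  qed
  have intDz: "(LBINT z:{z0<..}. ?Dz z y) = - ?Fb y" if y: "y > 0" for y
  proof -
    have "(LBINT z:{z0<..}. ?Dz z y) = 0 - (a1 * z0 - a2 * y) * I t z0 y"
    proof (rule FTC_inf)
      show "continuous_on {z0..} (\<lambda>z. (a1 * z - a2 * y) * I t z y)"
        using c1[OF t y] by (auto intro!: continuous_intros)
      show "((\<lambda>z. (a1 * z - a2 * y) * I t z y) has_real_derivative ?Dz x y) (at x)" if "x > z0" for x
        by (rule Dz_der[OF that y])
      show "set_integrable lborel {z0<..} (\<lambda>z. ?Dz z y)" by (rule Dz_int[OF y])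
      show "((\<lambda>z. (a1 * z - a2 * y) * I t z y) \<longlongrightarrow> 0) at_top"
      proof (rule Lim_null_comparison[OF _ lim_inv[of "(\<bar>0\<bar> + \<bar>a1\<bar> + \<bar>- a2\<bar>) * C"]])
        show "\<forall>\<^sub>F z in at_top. norm ((a1 * z - a2 * y) * I t z y) \<le> (\<bar>0\<bar> + \<bar>a1\<bar> + \<bar>- a2\<bar>) * C / (1 + z\<^sup>2)"
          using eventually_gt_at_top[of "max z0 0"]
        proof eventually_elim
          case (elim z)
          have "\<bar>(0 + a1 * z + (- a2) * y) * I t z y\<bar> \<le> (\<bar>0\<bar> + \<bar>a1\<bar> + \<bar>- a2\<bar>) * C / (1 + z\<^sup>2)"
            by (rule lb) (use C[OF tin _ y, of z] elim y in auto)
          then show ?case by simp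
        qed
      qed
    qed
    then show ?thesis by simp
  qed
  have Qeq: "?Q t y = ?Fb y - ?Kd y" if y: "y > 0" for y
  proof -
    have "?Q t y = (LBINT z:{z0<..}. - ?Dz z y - ?Dy z y)"
    proof (rule set_lebesgue_integral_cong)
      show "{z0<..} \<in> sets lborel" by simp
      show "\<forall>z. z \<in> {z0<..} \<longrightarrow> ?It t z y = - ?Dz z y - ?Dy z y"
      proof (intro allI impI)
        fix z assume "z \<in> {z0<..}"
        then have "?It t z y + ?Dz z y + ?Dy z y = 0" using I_pde[OF t _ y, of z] by auto
        then show "?It t z y = - ?Dz z y - ?Dy z y" by linarith
      qed
    qed
    also have "\<dots> = (LBINT z:{z0<..}. - ?Dz z y) - ?Kd y"
    proof (rule set_integral_diff(2))
      show "set_integrable lborel {z0<..} (\<lambda>z. - ?Dz z y)"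
        using integrable_minus[OF Dz_int[OF y, unfolded set_integrable_def]] unfolding set_integrable_def by simp
      show "set_integrable lborel {z0<..} (\<lambda>z. ?Dy z y)" by (rule Dy_int[OF y])
    qed
    also have "(LBINT z:{z0<..}. - ?Dz z y) = - (LBINT z:{z0<..}. ?Dz z y)"
      by (rule set_integral_uminus) (rule Dz_int[OF y])
    finally show ?thesis using intDz[OF y] by simp
  qed
  let ?Kf = "\<lambda>y. LBINT z:{z0<..}. (- a3 * y + a4 * z) * I t z y"
  let ?g = "\<lambda>s z. indicator {z0<..} z *\<^sub>R ((- a3 * s + a4 * z) * I t z s)"
  have Dyb: "\<bar>?Dy z y\<bar> \<le> (\<bar>a3\<bar> + (\<bar>a4\<bar> + \<bar>a3\<bar>)) * C / (1 + z\<^sup>2)" if z: "z > z0" and y: "y > 0" for z y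
  proof -
    have z': "z \<ge> 0" using z pos by auto
    have b1: "\<bar>(- a3 + 0 * z + 0 * y) * I t z y\<bar> \<le> (\<bar>- a3\<bar> + \<bar>0\<bar> + \<bar>0\<bar>) * C / (1 + z\<^sup>2)"
      by (rule lb) (use C[OF tin z y] z' y in auto)
    have b2: "\<bar>(0 + a4 * z + (- a3) * y) * ?Iy t z y\<bar> \<le> (\<bar>0\<bar> + \<bar>a4\<bar> + \<bar>- a3\<bar>) * C / (1 + z\<^sup>2)"
      by (rule lb) (use C[OF tin z y] z' y in auto)
    have "\<bar>?Dy z y\<bar> \<le> \<bar>- a3 * I t z y\<bar> + \<bar>(- a3 * y + a4 * z) * ?Iy t z y\<bar>"
      unfolding Dy_eq[OF z y] by (rule abs_triangle_ineq)
    also have "\<dots> \<le> \<bar>a3\<bar> * C / (1 + z\<^sup>2) + (\<bar>a4\<bar> + \<bar>a3\<bar>) * C / (1 + z\<^sup>2)"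
      using b1 b2 by (intro add_mono) (simp_all add: algebra_simps)
    also have "\<dots> = (\<bar>a3\<bar> + (\<bar>a4\<bar> + \<bar>a3\<bar>)) * C / (1 + z\<^sup>2)" by (simp add: add_divide_distrib algebra_simps)
    finally show ?thesis .
  qed
  have GIb: "\<bar>(- a3 * y + a4 * z) * I t z y\<bar> \<le> (\<bar>a4\<bar> + \<bar>a3\<bar>) * C / (1 + z\<^sup>2)" if z: "z > z0" and y: "y > 0" for z y
  proof -
    have "\<bar>(0 + a4 * z + (- a3) * y) * I t z y\<bar> \<le> (\<bar>0\<bar> + \<bar>a4\<bar> + \<bar>- a3\<bar>) * C / (1 + z\<^sup>2)"
      by (rule lb) (use C[OF tin z y] z y pos in auto)
    then show ?thesis by (simp add: algebra_simps)
  qed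
  have GIb2: "\<bar>(- a3 * y + a4 * z) * I t z y\<bar> \<le> (\<bar>a3\<bar> + \<bar>a4\<bar>) * C / (1 + y\<^sup>2)" if z: "z > z0" and y: "y > 0" for z y
  proof -
    have "\<bar>(0 + (- a3) * y + a4 * z) * I t z y\<bar> \<le> (\<bar>0\<bar> + \<bar>- a3\<bar> + \<bar>a4\<bar>) * C / (1 + y\<^sup>2)"
      by (rule lb') (use C[OF tin z y] z y pos in auto)
    then show ?thesis by (simp add: algebra_simps)
  qed
  have mg: "?g s \<in> borel_measurable lborel" if s: "s > 0" for s
  proof -
    have "continuous_on {z0<..} (\<lambda>z. (- a3 * s + a4 * z) * I t z s)"
      using c1o[OF t s] by (auto intro!: continuous_intros)
    then show ?thesis using meas1[of "{z0<..}" "\<lambda>z. (- a3 * s + a4 * z) * I t z s"] by simp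
  qed
  have gb: "\<bar>?g s z\<bar> \<le> (\<bar>a4\<bar> + \<bar>a3\<bar>) * C / (1 + z\<^sup>2)" if s: "s > 0" for s z
  proof (cases "z > z0")
    case True then show ?thesis using GIb[OF True s] by simp
  qed (use C0 in \<open>simp add: indicator_def add_pos_nonneg\<close>)
  have KfD: "(?Kf has_real_derivative ?Kd y) (at y)" if y: "y > 0" for y
  proof -
    have "((\<lambda>s. integral\<^sup>L lborel (?g s)) has_real_derivative
            integral\<^sup>L lborel (\<lambda>z. indicator {z0<..} z *\<^sub>R ?Dy z y)) (at y)"
    proof (rule diff_int[where d="y/2" and w="\<lambda>z. (\<bar>a3\<bar> + (\<bar>a4\<bar> + \<bar>a3\<bar>)) * C / (1 + z\<^sup>2)"])
      have bs: "w > 0" if "w \<in> ball y (y/2)" for w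
      proof -
        have "\<bar>y - w\<bar> < y/2" using that by (simp add: dist_real_def)
        then have "y - w < y/2 \<and> -(y - w) < y/2" by (rule abs_less_iff[THEN iffD1])
        then show ?thesis using y by auto
      qed
      show "0 < y/2" using y by simp
      show "?g s \<in> borel_measurable lborel" if "s \<in> ball y (y/2)" for s using mg[OF bs[OF that]] .
      show "(\<lambda>z. indicator {z0<..} z *\<^sub>R ?Dy z y) \<in> borel_measurable lborel"
        using Dy_int[OF y] unfolding set_integrable_def by (rule borel_measurable_integrable)
      show "integrable lborel (\<lambda>z. (\<bar>a3\<bar> + (\<bar>a4\<bar> + \<bar>a3\<bar>)) * C / (1 + z\<^sup>2))" by (rule int_inv)
      show "integrable lborel (?g y)"
      proof (rule Bochner_Integration.integrable_bound[OF int_inv[of "(\<bar>a4\<bar> + \<bar>a3\<bar>) * C"] mg[OF y]])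
        show "AE z in lborel. norm (?g y z) \<le> norm ((\<bar>a4\<bar> + \<bar>a3\<bar>) * C / (1 + z\<^sup>2))"
        proof (rule AE_I2)
          fix z
          have "\<bar>?g y z\<bar> \<le> (\<bar>a4\<bar> + \<bar>a3\<bar>) * C / (1 + z\<^sup>2)" by (rule gb[OF y])
          also have "\<dots> \<le> \<bar>(\<bar>a4\<bar> + \<bar>a3\<bar>) * C / (1 + z\<^sup>2)\<bar>" by (rule abs_ge_self)
          finally show "norm (?g y z) \<le> norm ((\<bar>a4\<bar> + \<bar>a3\<bar>) * C / (1 + z\<^sup>2))" by (simp only: real_norm_def)
        qed
      qed
      show "AE z in lborel. \<forall>s\<in>ball y (y/2). ((\<lambda>s. ?g s z) has_real_derivative
              indicator {z0<..} z *\<^sub>R ?Dy z s) (at s) \<and>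
              \<bar>indicator {z0<..} z *\<^sub>R ?Dy z s\<bar> \<le> (\<bar>a3\<bar> + (\<bar>a4\<bar> + \<bar>a3\<bar>)) * C / (1 + z\<^sup>2)"
      proof (rule AE_I2, intro ballI conjI)
        fix z s assume s: "s \<in> ball y (y/2)"
        show "((\<lambda>s. ?g s z) has_real_derivative indicator {z0<..} z *\<^sub>R ?Dy z s) (at s)"
        proof (cases "z > z0")
          case True
          then show ?thesis using Dy_der[OF True bs[OF s]] by simp
        qed (simp add: indicator_def)
        show "\<bar>indicator {z0<..} z *\<^sub>R ?Dy z s\<bar> \<le> (\<bar>a3\<bar> + (\<bar>a4\<bar> + \<bar>a3\<bar>)) * C / (1 + z\<^sup>2)"
        proof (cases "z > z0")
          case True
          then show ?thesis using Dyb[OF True bs[OF s]] by simp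
        qed (use C0 in \<open>simp add: indicator_def add_pos_nonneg\<close>)
      qed
    qed
    then show ?thesis by (simp add: set_lebesgue_integral_def)
  qed
  have Kf0: "?Kf 0 = 0"
  proof -
    have "?Kf 0 = (LBINT z:{z0<..}. 0)"
      by (rule set_lebesgue_integral_cong) (use I_bc_y0[OF t] in auto)
    then show ?thesis by simp
  qed
  have Kf_cont: "continuous_on {0..} ?Kf"
    unfolding continuous_on_eq_continuous_within
  proof
    fix y :: real assume "y \<in> {0..}"
    show "continuous (at y within {0..}) ?Kf"
    proof (cases "y > 0")
      case True
      have "isCont ?Kf y" by (rule DERIV_isCont[OF KfD[OF True]])
      then show ?thesis by (rule continuous_at_imp_continuous_at_within)
    next
      case False
      then have y0': "y = 0" using \<open>y \<in> {0..}\<close> by auto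
      have "((\<lambda>s. integral\<^sup>L lborel (?g s)) \<longlongrightarrow> integral\<^sup>L lborel (\<lambda>z::real. 0::real)) (at 0 within {0..})"
      proof (rule DCT_at[where w="\<lambda>z. (\<bar>a4\<bar> + \<bar>a3\<bar>) * C / (1 + z\<^sup>2)"])
        have ev: "\<forall>\<^sub>F s in at 0 within {0..}. s > (0::real)"
          unfolding at_within_Ici_at_right by (rule eventually_at_right_less)
        show "\<forall>\<^sub>F s in at 0 within {0..}. ?g s \<in> borel_measurable lborel"
          using ev by eventually_elim (rule mg)
        show "(\<lambda>z. 0::real) \<in> borel_measurable lborel" by simp
        show "integrable lborel (\<lambda>z. (\<bar>a4\<bar> + \<bar>a3\<bar>) * C / (1 + z\<^sup>2))" by (rule int_inv)
        show "AE z in lborel. ((\<lambda>s. ?g s z) \<longlongrightarrow> 0) (at 0 within {0..})"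
        proof (rule AE_I2)
          fix z
          show "((\<lambda>s. ?g s z) \<longlongrightarrow> 0) (at 0 within {0..})"
          proof (cases "z > z0")
            case True
            have l: "((\<lambda>s. I t z s) \<longlongrightarrow> I t z 0) (at 0 within {0..})"
              by (rule bspec[OF c2[OF t True, unfolded continuous_on_def]]) simp
            have "((\<lambda>s. (- a3 * s + a4 * z) * I t z s) \<longlongrightarrow> (- a3 * 0 + a4 * z) * I t z 0) (at 0 within {0..})"
              by (rule tendsto_mult[OF tendsto_add[OF tendsto_mult[OF tendsto_const tendsto_ident_at] tendsto_const] l])
            then show ?thesis using I_bc_y0[OF t True] True by (simp add: indicator_def)
          qed (simp add: indicator_def)
        qed
        show "\<forall>\<^sub>F s in at 0 within {0..}. AE z in lborel. \<bar>?g s z\<bar> \<le> (\<bar>a4\<bar> + \<bar>a3\<bar>) * C / (1 + z\<^sup>2)"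
          using ev by eventually_elim (intro AE_I2 gb)
      qed
      then have "(?Kf \<longlongrightarrow> ?Kf 0) (at 0 within {0..})"
        using Kf0 by (simp add: set_lebesgue_integral_def)
      then show ?thesis using y0' by (simp add: continuous_within)
    qed
  qed
  have Kf_top: "(?Kf \<longlongrightarrow> 0) at_top"
  proof -
    have "((\<lambda>y. integral\<^sup>L lborel (?g (max 1 y))) \<longlongrightarrow> integral\<^sup>L lborel (\<lambda>z::real. 0::real)) at_top"
    proof (rule integral_dominated_convergence_at_top[where w="\<lambda>z. (\<bar>a4\<bar> + \<bar>a3\<bar>) * C / (1 + z\<^sup>2)"])
      show "(\<lambda>z. 0::real) \<in> borel_measurable lborel" by simp
      show "?g (max 1 y) \<in> borel_measurable lborel" for y by (rule mg) simp
      show "integrable lborel (\<lambda>z. (\<bar>a4\<bar> + \<bar>a3\<bar>) * C / (1 + z\<^sup>2))" by (rule int_inv)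
      show "\<forall>\<^sub>F y in at_top. AE z in lborel. norm (?g (max 1 y) z) \<le> (\<bar>a4\<bar> + \<bar>a3\<bar>) * C / (1 + z\<^sup>2)"
      proof (intro always_eventually allI AE_I2)
        fix y z :: real
        have "max 1 y > 0" by simp
        from gb[OF this, of z] show "norm (?g (max 1 y) z) \<le> (\<bar>a4\<bar> + \<bar>a3\<bar>) * C / (1 + z\<^sup>2)"
          by (simp only: real_norm_def)
      qed
      show "AE z in lborel. ((\<lambda>y. ?g (max 1 y) z) \<longlongrightarrow> 0) at_top"
      proof (rule AE_I2)
        fix z
        show "((\<lambda>y. ?g (max 1 y) z) \<longlongrightarrow> 0) at_top"
        proof (cases "z > z0")
          case True
          show ?thesis
          proof (rule Lim_null_comparison[OF _ lim_inv[of "(\<bar>a3\<bar> + \<bar>a4\<bar>) * C"]])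
            show "\<forall>\<^sub>F y in at_top. norm (?g (max 1 y) z) \<le> (\<bar>a3\<bar> + \<bar>a4\<bar>) * C / (1 + y\<^sup>2)"
              using eventually_gt_at_top[of 1]
            proof eventually_elim
              case (elim y)
              then have "max 1 y = y" by simp
              then show ?case using GIb2[OF True, of y] elim True by simp
            qed
          qed
        qed (simp add: indicator_def)
      qed
    qed
    moreover have "\<forall>\<^sub>F y in at_top. integral\<^sup>L lborel (?g (max 1 y)) = ?Kf y"
      using eventually_gt_at_top[of 1]
      by eventually_elim (simp add: set_lebesgue_integral_def)
    ultimately show ?thesis by (simp add: tendsto_cong del: max_def)
  qed
  have Kd_int: "set_integrable lborel {0<..} ?Kd"
  proof -
    have "set_integrable lborel {0<..} (\<lambda>y. ?Fb y - ?Q t y)"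
      by (rule set_integral_diff(1)[OF Fb_int Q_int])
    moreover have "set_integrable lborel {0<..} (\<lambda>y. ?Fb y - ?Q t y) = set_integrable lborel {0<..} ?Kd"
      by (rule set_integrable_cong) (use Qeq in auto)
    ultimately show ?thesis by simp
  qed
  have Kd_zero: "(LBINT y:{0<..}. ?Kd y) = 0"
    using FTC_inf[OF Kf_cont KfD Kd_int Kf_top] Kf0 by simp
  have intQ: "(LBINT y:{0<..}. ?Q t y) = (LBINT y:{0<..}. ?Fb y)"
  proof -
    have "(LBINT y:{0<..}. ?Q t y) = (LBINT y:{0<..}. ?Fb y - ?Kd y)"
      by (rule set_lebesgue_integral_cong) (use Qeq in auto)
    also have "\<dots> = (LBINT y:{0<..}. ?Fb y) - (LBINT y:{0<..}. ?Kd y)"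
      by (rule set_integral_diff(2)[OF Fb_int Kd_int])
    finally show ?thesis using Kd_zero by simp
  qed
  have kpos: "a1 * z0 - a2 * ystar > 0"
  proof -
    have "a2 * ystar < a2 * y0" using ystar_range pos by simp
    also have "a2 * y0 = a1 * z0" using y0_def pos by simp
    finally show ?thesis by simp
  qed
  have mg0: "(\<lambda>y. indicator {0..y0} y * g y) \<in> borel_measurable lborel"
    using borel_measurable_integrable[OF g_int[unfolded set_integrable_def]] by simp
  have yg_int: "set_integrable lborel {0..y0} (\<lambda>y. y * g y)"
    unfolding set_integrable_def
  proof (rule Bochner_Integration.integrable_bound)
    show "integrable lborel (\<lambda>y. y0 * \<bar>indicator {0..y0} y *\<^sub>R g y\<bar>)"
      using g_int unfolding set_integrable_def by (intro integrable_mult_right integrable_abs)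
    have "(\<lambda>y. indicator {0..y0} y *\<^sub>R (y * g y)) = (\<lambda>y. y * (indicator {0..y0} y * g y))"
      by (auto simp: fun_eq_iff)
    then show "(\<lambda>y. indicator {0..y0} y *\<^sub>R (y * g y)) \<in> borel_measurable lborel"
      using mg0 by simp
    show "AE y in lborel. norm (indicator {0..y0} y *\<^sub>R (y * g y)) \<le> norm (y0 * \<bar>indicator {0..y0} y *\<^sub>R g y\<bar>)"
    proof (rule AE_I2)
      fix y
      show "norm (indicator {0..y0} y *\<^sub>R (y * g y)) \<le> norm (y0 * \<bar>indicator {0..y0} y *\<^sub>R g y\<bar>)"
      proof (cases "y \<in> {0..y0}")
        case True
        then have "\<bar>y\<bar> \<le> y0" by auto
        then have "\<bar>y\<bar> * \<bar>g y\<bar> \<le> y0 * \<bar>g y\<bar>" by (rule mult_right_mono) simp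
        then show ?thesis using True y0pos by (simp add: abs_mult)
      qed simp
    qed
  qed
  have intg: "(LBINT y:{0..y0}. (a1 * z0 - a2 * y) * g y) = a1 * z0 - a2 * ystar"
  proof -
    have "(LBINT y:{0..y0}. (a1 * z0 - a2 * y) * g y) = (LBINT y:{0..y0}. a1 * z0 * g y - a2 * (y * g y))"
      by (rule set_lebesgue_integral_cong) (auto simp: algebra_simps)
    also have "\<dots> = (LBINT y:{0..y0}. a1 * z0 * g y) - (LBINT y:{0..y0}. a2 * (y * g y))"
      by (rule set_integral_diff(2)) (use g_int yg_int in auto)
    also have "\<dots> = a1 * z0 - a2 * ystar" using g_mass ystar_def by simp
    finally show ?thesis .
  qed
  have splitFb: "(LBINT y:{0<..}. ?Fb y) = E t / \<tau>h + (LBINT y:{y0<..}. ?Fb y)"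
  proof -
    have un: "{0<..} = {0<..y0} \<union> {y0<..}" using y0pos by auto
    have "(LBINT y:{0<..y0} \<union> {y0<..}. ?Fb y) = (LBINT y:{0<..y0}. ?Fb y) + (LBINT y:{y0<..}. ?Fb y)"
    proof (rule set_integral_Un)
      show "{0<..y0} \<inter> {y0<..} = {}" by auto
      show "set_integrable lborel {0<..y0} ?Fb" by (rule set_integrable_subset[OF Fb_int]) auto
      show "set_integrable lborel {y0<..} ?Fb" by (rule set_integrable_subset[OF Fb_int]) (use y0pos in auto)
    qed
    then have 1: "(LBINT y:{0<..}. ?Fb y) = (LBINT y:{0<..y0}. ?Fb y) + (LBINT y:{y0<..}. ?Fb y)"
      using un by simp
    have "(LBINT y:{0<..y0}. ?Fb y) = (LBINT y:{0<..y0}. (E t / ((a1 * z0 - a2 * ystar) * \<tau>h)) * ((a1 * z0 - a2 * y) * g y))"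
      by (rule set_lebesgue_integral_cong) (use I_bc_z0[OF t] in auto)
    also have "\<dots> = (E t / ((a1 * z0 - a2 * ystar) * \<tau>h)) * (LBINT y:{0<..y0}. (a1 * z0 - a2 * y) * g y)"
      by (rule set_integral_mult_right)
    also have "(LBINT y:{0<..y0}. (a1 * z0 - a2 * y) * g y) = (LBINT y:{0..y0}. (a1 * z0 - a2 * y) * g y)"
    proof (rule conv_sub)
      have "(\<lambda>y. indicator {0..y0} y * ((a1 * z0 - a2 * y) * g y)) = (\<lambda>y. (a1 * z0 - a2 * y) * (indicator {0..y0} y * g y))"
        by (auto simp: fun_eq_iff)
      then show "(\<lambda>y. indicator {0..y0} y * ((a1 * z0 - a2 * y) * g y)) \<in> borel_measurable lborel"
        using mg0 by simp
      show "{0<..y0} \<in> sets lborel" by simp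
      show "{0<..y0} \<subseteq> {0..y0}" by auto
      show "AE x in lborel. x \<in> {0..y0} \<longrightarrow> x \<in> {0<..y0}"
        using AE_lborel_singleton[of 0] by eventually_elim auto
    qed
    also have "(E t / ((a1 * z0 - a2 * ystar) * \<tau>h)) * (LBINT y:{0..y0}. (a1 * z0 - a2 * y) * g y) = E t / \<tau>h"
    proof -
      have "(E t / ((a1 * z0 - a2 * ystar) * \<tau>h)) * (LBINT y:{0..y0}. (a1 * z0 - a2 * y) * g y)
            = (E t / ((a1 * z0 - a2 * ystar) * \<tau>h)) * (a1 * z0 - a2 * ystar)" by (simp only: intg)
      also have "\<dots> = E t / \<tau>h" using kpos pos by (simp add: field_simps)
      finally show ?thesis .
    qed
    finally show ?thesis using 1 by simp
  qed
  let ?Dr = "\<lambda>y. deriv (\<lambda>w. a5 * w * R t w) y"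
  have Dr_der: "((\<lambda>w. a5 * w * R t w) has_real_derivative ?Dr y) (at y)" if y: "y > y0" for y
  proof -
    have dR: "(\<lambda>w. R t w) differentiable (at y)" using R_diff[OF t y] by auto
    have dc: "((\<lambda>w. a5 * w) has_real_derivative a5) (at y)"
      by (auto intro!: derivative_eq_intros)
    show ?thesis using deriv_prod_lin[OF dc dR] by simp
  qed
  have Rt_eq: "?Rt t y = ?Dr y - ?Fb y" if y: "y > y0" for y
    using R_pde[OF t y] by (simp add: algebra_simps)
  have Fb_int2: "set_integrable lborel {y0<..} ?Fb"
    by (rule set_integrable_subset[OF Fb_int]) (use y0pos in auto)
  have Dr_int: "set_integrable lborel {y0<..} ?Dr"
  proof -
    have "set_integrable lborel {y0<..} (\<lambda>y. ?Rt t y + ?Fb y)"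
      by (rule set_integral_add(1)[OF Rt_int Fb_int2])
    moreover have "set_integrable lborel {y0<..} (\<lambda>y. ?Rt t y + ?Fb y) = set_integrable lborel {y0<..} ?Dr"
      by (rule set_integrable_cong) (use Rt_eq in auto)
    ultimately show ?thesis by simp
  qed
  have intDr: "(LBINT y:{y0<..}. ?Dr y) = 0 - a5 * y0 * R t y0"
  proof (rule FTC_inf)
    show "continuous_on {y0..} (\<lambda>y. a5 * y * R t y)"
      using cR1[OF t] by (auto intro!: continuous_intros)
    show "((\<lambda>y. a5 * y * R t y) has_real_derivative ?Dr x) (at x)" if "x > y0" for x
      by (rule Dr_der[OF that])
    show "set_integrable lborel {y0<..} ?Dr" by (rule Dr_int)
    show "((\<lambda>y. a5 * y * R t y) \<longlongrightarrow> 0) at_top"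
    proof (rule Lim_null_comparison[OF _ lim_inv[of "(\<bar>0\<bar> + \<bar>a5\<bar> + \<bar>0\<bar>) * CR"]])
      show "\<forall>\<^sub>F y in at_top. norm (a5 * y * R t y) \<le> (\<bar>0\<bar> + \<bar>a5\<bar> + \<bar>0\<bar>) * CR / (1 + y\<^sup>2)"
        using eventually_gt_at_top[of "max y0 0"]
      proof eventually_elim
        case (elim y)
        have "\<bar>(0 + a5 * y + 0 * 0) * R t y\<bar> \<le> (\<bar>0\<bar> + \<bar>a5\<bar> + \<bar>0\<bar>) * CR / (1 + y\<^sup>2)"
          by (rule lb) (use CR[OF tin, of y] elim in auto)
        then show ?case by simp
      qed
    qed
  qed
  have intR: "(LBINT y:{y0<..}. ?Rt t y) = - a5 * y0 * R t y0 - (LBINT y:{y0<..}. ?Fb y)"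
  proof -
    have "(LBINT y:{y0<..}. ?Rt t y) = (LBINT y:{y0<..}. ?Dr y - ?Fb y)"
      by (rule set_lebesgue_integral_cong) (use Rt_eq in auto)
    also have "\<dots> = (LBINT y:{y0<..}. ?Dr y) - (LBINT y:{y0<..}. ?Fb y)"
      by (rule set_integral_diff(2)[OF Dr_int Fb_int2])
    finally show ?thesis using intDr by simp
  qed
  have dTot: "((\<lambda>s. S s + E s + ?Pint s + ?Rint s) has_real_derivative
      ((- b * \<beta>vh * m * Iv t * S t + a5 * y0 * R t y0) + (b * \<beta>vh * m * Iv t * S t - E t / \<tau>h)
        + (LBINT y:{0<..}. ?Q t y) + (LBINT y:{y0<..}. ?Rt t y))) (at t)"
    by (intro DERIV_add S_ode[OF t] E_ode[OF t] dP dR)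
  have val: "(- b * \<beta>vh * m * Iv t * S t + a5 * y0 * R t y0) + (b * \<beta>vh * m * Iv t * S t - E t / \<tau>h)
        + (LBINT y:{0<..}. ?Q t y) + (LBINT y:{y0<..}. ?Rt t y) = 0"
    using intQ splitFb intR by simp
  have ev: "\<forall>\<^sub>F s in nhds t. S s + E s + (LBINT y:{0..}. LBINT z:{z0..}. I s z y) + (LBINT y:{y0..}. R s y)
              = S s + E s + ?Pint s + ?Rint s"
  proof -
    have "\<forall>\<^sub>F s in nhds t. s \<in> {0<..}" by (rule eventually_nhds_in_open) (use t in auto)
    then show ?thesis by eventually_elim (use eqP eqR in auto)
  qed
  show "((\<lambda>t. S t + E t + (LBINT y:{0..}. LBINT z:{z0..}. I t z y) + (LBINT y:{y0..}. R t y))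
              has_real_derivative 0) (at t)"
  proof -
    have d0: "((\<lambda>s. S s + E s + ?Pint s + ?Rint s) has_real_derivative 0) (at t)"
      using dTot by (simp only: val)
    show ?thesis by (rule DERIV_cong_ev[OF refl ev refl, THEN iffD2, OF d0])
  qed
qed

end
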